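(* Let $G$ be a connected non-complete graph. If $\mu_t(G)=n(G)-\operatorname{diam}(G)+1$, then $\gamma_c(G)=\operatorname{diam}(G)-1$.
   Context: All graphs are finite, simple and undirected; $n(G)$ denotes the order of $G$ and $\operatorname{diam}(G)$ its diameter. The connected domination number $\gamma_c(G)$ is the minimum cardinality of a dominating set $D$ of $G$ such that the induced subgraph $G[D]$ is connected. Let $G$ be a connected graph and $X\subseteq V(G)$. Two vertices $x,y\in V(G)$ are $X$-visible if there exists a shortest $x,y$-path in $G$ none of whose internal vertices (i.e., vertices other than $x$ and $y$) belongs to $X$. The set $X$ is a total mutual-visibility set of $G$ if every two vertices of $G$ are $X$-visible (the empty set is allowed). The total mutual-visibility number $\mu_t(G)$ is the maximum cardinality of a total mutual-visibility set of $G$. *)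

theory Defs
  imports Main
begin

definition simple_graph :: "'a set \<Rightarrow> ('a \<Rightarrow> 'a \<Rightarrow> bool) \<Rightarrow> bool" where
  "simple_graph V E \<longleftrightarrow> finite V \<and> (\<forall>x y. E x y \<longrightarrow> x \<in> V \<and> y \<in> V)
     \<and> (\<forall>x y. E x y \<longrightarrow> E y x) \<and> (\<forall>x. \<not> E x x)"

definition is_path :: "'a set \<Rightarrow> ('a \<Rightarrow> 'a \<Rightarrow> bool) \<Rightarrow> 'a list \<Rightarrow> bool" where
  "is_path V E p \<longleftrightarrow> p \<noteq> [] \<and> set p \<subseteq> V \<and> distinct p \<and> successively E p"

definition path_between :: "'a set \<Rightarrow> ('a \<Rightarrow> 'a \<Rightarrow> bool) \<Rightarrow> 'a \<Rightarrow> 'a \<Rightarrow> 'a list \<Rightarrow> bool" where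
  "path_between V E x y p \<longleftrightarrow> is_path V E p \<and> hd p = x \<and> last p = y"

definition graph_connected :: "'a set \<Rightarrow> ('a \<Rightarrow> 'a \<Rightarrow> bool) \<Rightarrow> bool" where
  "graph_connected V E \<longleftrightarrow> V \<noteq> {} \<and> (\<forall>x\<in>V. \<forall>y\<in>V. \<exists>p. path_between V E x y p)"

definition dist :: "'a set \<Rightarrow> ('a \<Rightarrow> 'a \<Rightarrow> bool) \<Rightarrow> 'a \<Rightarrow> 'a \<Rightarrow> nat" where
  "dist V E x y = (LEAST k. \<exists>p. path_between V E x y p \<and> length p = k + 1)"

definition diam :: "'a set \<Rightarrow> ('a \<Rightarrow> 'a \<Rightarrow> bool) \<Rightarrow> nat" where
  "diam V E = Max {dist V E x y | x y. x \<in> V \<and> y \<in> V}"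

definition shortest_path :: "'a set \<Rightarrow> ('a \<Rightarrow> 'a \<Rightarrow> bool) \<Rightarrow> 'a \<Rightarrow> 'a \<Rightarrow> 'a list \<Rightarrow> bool" where
  "shortest_path V E x y p \<longleftrightarrow> path_between V E x y p \<and> length p = dist V E x y + 1"

definition complete_graph :: "'a set \<Rightarrow> ('a \<Rightarrow> 'a \<Rightarrow> bool) \<Rightarrow> bool" where
  "complete_graph V E \<longleftrightarrow> (\<forall>x\<in>V. \<forall>y\<in>V. x \<noteq> y \<longrightarrow> E x y)"

text \<open>Internal vertices of a path p = [x, ..., y] are those of butlast (tl p).\<close>
definition X_visible :: "'a set \<Rightarrow> ('a \<Rightarrow> 'a \<Rightarrow> bool) \<Rightarrow> 'a set \<Rightarrow> 'a \<Rightarrow> 'a \<Rightarrow> bool" where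
  "X_visible V E X x y \<longleftrightarrow> (\<exists>p. shortest_path V E x y p \<and> (\<forall>v\<in>set (butlast (tl p)). v \<notin> X))"

definition total_mutual_visibility_set :: "'a set \<Rightarrow> ('a \<Rightarrow> 'a \<Rightarrow> bool) \<Rightarrow> 'a set \<Rightarrow> bool" where
  "total_mutual_visibility_set V E X \<longleftrightarrow> X \<subseteq> V \<and> (\<forall>x\<in>V. \<forall>y\<in>V. X_visible V E X x y)"

definition mu_t :: "'a set \<Rightarrow> ('a \<Rightarrow> 'a \<Rightarrow> bool) \<Rightarrow> nat" where
  "mu_t V E = Max {card X | X. total_mutual_visibility_set V E X}"

definition dominating_set :: "'a set \<Rightarrow> ('a \<Rightarrow> 'a \<Rightarrow> bool) \<Rightarrow> 'a set \<Rightarrow> bool" where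
  "dominating_set V E D \<longleftrightarrow> D \<subseteq> V \<and> (\<forall>v\<in>V. v \<in> D \<or> (\<exists>u\<in>D. E u v))"

definition induced_edges :: "('a \<Rightarrow> 'a \<Rightarrow> bool) \<Rightarrow> 'a set \<Rightarrow> 'a \<Rightarrow> 'a \<Rightarrow> bool" where
  "induced_edges E D = (\<lambda>x y. E x y \<and> x \<in> D \<and> y \<in> D)"

definition connected_dominating_set :: "'a set \<Rightarrow> ('a \<Rightarrow> 'a \<Rightarrow> bool) \<Rightarrow> 'a set \<Rightarrow> bool" where
  "connected_dominating_set V E D \<longleftrightarrow> dominating_set V E D \<and> graph_connected D (induced_edges E D)"

definition gamma_c :: "'a set \<Rightarrow> ('a \<Rightarrow> 'a \<Rightarrow> bool) \<Rightarrow> nat" where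
  "gamma_c V E = Min {card D | D. connected_dominating_set V E D}"

end

theory Submission
  imports Defs
begin

lemma dist_le:
  assumes "path_between V E x y p"
  shows "dist V E x y \<le> length p - 1"
proof -
  have "length p \<noteq> 0" using assms by (auto simp: path_between_def is_path_def)
  hence "\<exists>q. path_between V E x y q \<and> length q = (length p - 1) + 1" using assms by auto
  thus ?thesis unfolding dist_def by (rule Least_le)
qed

lemma shortest_ex:
  assumes "path_between V E x y p"
  shows "\<exists>q. shortest_path V E x y q"
proof -
  have "length p \<noteq> 0" using assms by (auto simp: path_between_def is_path_def)
  hence "\<exists>k q. path_between V E x y q \<and> length q = k + 1" using assms
    by (intro exI[of _ "length p - 1"] exI[of _ p]) auto
  then obtain k where "\<exists>q. path_between V E x y q \<and> length q = k + 1" by blast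
  hence "\<exists>q. path_between V E x y q \<and> length q = (LEAST k. \<exists>q. path_between V E x y q \<and> length q = k + 1) + 1"
    by (rule LeastI)
  thus ?thesis unfolding shortest_path_def dist_def by blast
qed

lemma suffix_path:
  assumes "path_between V E b y p" "a \<in> set p"
  shows "\<exists>q. path_between V E a y q \<and> length q \<le> length p"
proof -
  obtain xs ys where p: "p = xs @ a # ys" using assms(2) split_list by metis
  have "path_between V E a y (a # ys)"
    using assms(1) unfolding p path_between_def is_path_def
    by (auto simp: successively_append_iff)
  thus ?thesis using p by auto
qed

lemma dist_step:
  assumes "E a b" "a \<in> V" "path_between V E b y p"
  shows "dist V E a y \<le> dist V E b y + 1"
proof -
  obtain q where q: "shortest_path V E b y q" using shortest_ex[OF assms(3)] by blast
  have qp: "path_between V E b y q" and ql: "length q = dist V E b y + 1"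
    using q by (auto simp: shortest_path_def)
  show ?thesis
  proof (cases "a \<in> set q")
    case True
    then obtain r where "path_between V E a y r" "length r \<le> length q"
      using suffix_path[OF qp] by blast
    thus ?thesis using dist_le[of V E a y r] ql by auto
  next
    case False
    have "path_between V E a y (a # q)"
      using qp False assms(1,2) unfolding path_between_def is_path_def
      by (cases q) auto
    thus ?thesis using dist_le[of V E a y "a # q"] ql by auto
  qed
qed

lemma dist_sym_le:
  assumes "\<forall>x y. E x y \<longrightarrow> E y x" "path_between V E a b p"
  shows "dist V E b a \<le> dist V E a b"
proof -
  obtain q where q: "shortest_path V E a b q" using shortest_ex[OF assms(2)] by blast
  have "path_between V E b a (rev q)" using q assms(1)
    by (auto simp: shortest_path_def path_between_def is_path_def hd_rev last_rev
        intro: successively_mono)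
  from dist_le[OF this] q show ?thesis by (auto simp: shortest_path_def)
qed

lemma dist_sym_eq:
  assumes "\<forall>x y. E x y \<longrightarrow> E y x" "path_between V E b a p"
  shows "dist V E a b = dist V E b a"
proof -
  have "path_between V E a b (rev p)" using assms
    by (auto simp: path_between_def is_path_def hd_rev last_rev intro: successively_mono)
  thus ?thesis using dist_sym_le[OF assms(1)] assms(2) by (meson le_antisym)
qed

lemma mem_path_cases:
  "x \<in> set p \<Longrightarrow> x = hd p \<or> x = last p \<or> x \<in> set (butlast (tl p))"
proof (cases p)
  case (Cons a rest)
  assume "x \<in> set p"
  then show ?thesis using Cons
    by (cases rest rule: rev_cases) auto
qed simp

lemma nonadj_internal:
  assumes "path_between V E x y p" "x \<noteq> y" "\<not> E x y"
  shows "\<exists>w. w \<in> set (butlast (tl p)) \<and> E x w \<and> w \<in> V"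
proof -
  from assms(1) have ne: "p \<noteq> []" and hd: "hd p = x" and la: "last p = y"
    and su: "successively E p" and sub: "set p \<subseteq> V"
    by (auto simp: path_between_def is_path_def)
  show ?thesis
  proof (cases p)
    case Nil thus ?thesis using ne by simp
  next
    case (Cons a r)
    show ?thesis
    proof (cases r)
      case Nil thus ?thesis using Cons hd la assms(2) by simp
    next
      case (Cons b r2)
      show ?thesis
      proof (cases r2)
        case Nil thus ?thesis using Cons \<open>p = a # r\<close> hd la su assms(3) by simp
      next
        case (Cons c r3)
        thus ?thesis using \<open>r = b # r2\<close> \<open>p = a # r\<close> hd su sub by auto
      qed
    qed
  qed
qed

lemma succ_induced:
  "successively E p \<Longrightarrow> set p \<subseteq> D \<Longrightarrow> successively (induced_edges E D) p"
  by (induction E p rule: successively.induct) (auto simp: induced_edges_def)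

theorem corollary2p5:
  fixes V :: "'a set" and E :: "'a \<Rightarrow> 'a \<Rightarrow> bool"
  assumes "simple_graph V E"
    and "graph_connected V E"
    and "\<not> complete_graph V E"
    and "mu_t V E = card V - diam V E + 1"
  shows "gamma_c V E = diam V E - 1"
proof -
  have fin: "finite V" and sym: "\<And>x y. E x y \<Longrightarrow> E y x"
    and inV: "\<And>x y. E x y \<Longrightarrow> x \<in> V \<and> y \<in> V"
    using assms(1) by (auto simp: simple_graph_def)
  have conn: "\<And>x y. x \<in> V \<Longrightarrow> y \<in> V \<Longrightarrow> \<exists>p. path_between V E x y p"
    and Vne: "V \<noteq> {}" using assms(2) by (auto simp: graph_connected_def)
  define S where "S = {card X | X. total_mutual_visibility_set V E X}"
  have Sfin: "finite S"
  proof -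
    have "S \<subseteq> card ` Pow V" by (auto simp: S_def total_mutual_visibility_set_def)
    thus ?thesis using fin finite_subset by blast
  qed
  have "total_mutual_visibility_set V E {}"
    unfolding total_mutual_visibility_set_def X_visible_def
    by simp (meson conn shortest_ex)
  hence Sne: "S \<noteq> {}" by (auto simp: S_def)
  have "mu_t V E \<in> S" unfolding mu_t_def S_def[symmetric] using Sfin Sne by (rule Max_in)
  then obtain X where tX: "total_mutual_visibility_set V E X" and cX: "card X = mu_t V E"
    by (auto simp: S_def)
  have XV: "X \<subseteq> V" and vis: "\<And>x y. x \<in> V \<Longrightarrow> y \<in> V \<Longrightarrow> X_visible V E X x y"
    using tX by (auto simp: total_mutual_visibility_set_def)
  obtain x0 y0 where x0: "x0 \<in> V" "y0 \<in> V" "x0 \<noteq> y0" "\<not> E x0 y0"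
    using assms(3) by (auto simp: complete_graph_def)
  define D where "D = V - X"
  have Dne: "D \<noteq> {}"
  proof -
    obtain p where p: "shortest_path V E x0 y0 p" "\<forall>v\<in>set (butlast (tl p)). v \<notin> X"
      using vis[OF x0(1,2)] by (auto simp: X_visible_def)
    then obtain w where "w \<in> set (butlast (tl p))" "w \<in> V"
      using nonadj_internal[of V E x0 y0 p] x0 by (auto simp: shortest_path_def)
    thus ?thesis using p(2) by (auto simp: D_def)
  qed
  have dom: "dominating_set V E D"
    unfolding dominating_set_def
  proof (intro conjI ballI)
    show "D \<subseteq> V" by (auto simp: D_def)
  next
    fix v assume vV: "v \<in> V"
    show "v \<in> D \<or> (\<exists>u\<in>D. E u v)"
    proof (cases "v \<in> D")
      case False
      hence vX: "v \<in> X" using vV by (auto simp: D_def)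
      show ?thesis
      proof (cases "\<exists>y\<in>V. y \<noteq> v \<and> \<not> E v y")
        case True
        then obtain y where y: "y \<in> V" "y \<noteq> v" "\<not> E v y" by blast
        obtain p where p: "shortest_path V E v y p" "\<forall>v\<in>set (butlast (tl p)). v \<notin> X"
          using vis[OF vV y(1)] by (auto simp: X_visible_def)
        then obtain w where "w \<in> set (butlast (tl p))" "w \<in> V" "E v w"
          using nonadj_internal[of V E v y p] y by (auto simp: shortest_path_def)
        thus ?thesis using p(2) sym by (auto simp: D_def)
      next
        case False
        obtain w where "w \<in> D" using Dne by blast
        moreover have "w \<noteq> v" using \<open>w \<in> D\<close> vX by (auto simp: D_def)
        ultimately show ?thesis using False sym by (auto simp: D_def)
      qed
    qed simp
  qed
  have cD: "graph_connected D (induced_edges E D)"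
    unfolding graph_connected_def
  proof (intro conjI ballI)
    show "D \<noteq> {}" by fact
  next
    fix a b assume a: "a \<in> D" and b: "b \<in> D"
    have aV: "a \<in> V" "b \<in> V" using a b by (auto simp: D_def)
    obtain p where p: "shortest_path V E a b p" "\<forall>v\<in>set (butlast (tl p)). v \<notin> X"
      using vis[OF aV] by (auto simp: X_visible_def)
    have pb: "path_between V E a b p" using p by (auto simp: shortest_path_def)
    have sD: "set p \<subseteq> D"
    proof
      fix z assume z: "z \<in> set p"
      have "z \<in> V" using z pb by (auto simp: path_between_def is_path_def)
      moreover have "z \<notin> X"
        using mem_path_cases[OF z] pb p(2) a b by (auto simp: path_between_def D_def)
      ultimately show "z \<in> D" by (auto simp: D_def)
    qed
    have "path_between D (induced_edges E D) a b p"
      using pb sD succ_induced[of E p D] by (auto simp: path_between_def is_path_def)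
    thus "\<exists>p. path_between D (induced_edges E D) a b p" by blast
  qed
  define T where "T = {card D | D. connected_dominating_set V E D}"
  have Tfin: "finite T"
  proof -
    have "T \<subseteq> card ` Pow V"
      by (auto simp: T_def connected_dominating_set_def dominating_set_def)
    thus ?thesis using fin finite_subset by blast
  qed
  have "card D \<in> T" using dom cD by (auto simp: T_def connected_dominating_set_def)
  hence "gamma_c V E \<le> card D" unfolding gamma_c_def T_def[symmetric] using Tfin by simp
  also have "card D = card V - card X" unfolding D_def using card_Diff_subset[OF finite_subset[OF XV fin] XV] .
  finally have up: "gamma_c V E \<le> diam V E - 1" using cX assms(4) by linarith
  have "gamma_c V E \<in> T" unfolding gamma_c_def T_def[symmetric]
  proof (rule Min_in[OF Tfin])
    have "induced_edges E V = E" using inV by (auto simp: induced_edges_def fun_eq_iff)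
    hence "connected_dominating_set V E V" using assms(2)
      by (auto simp: connected_dominating_set_def dominating_set_def)
    thus "T \<noteq> {}" by (auto simp: T_def)
  qed
  then obtain C where C: "connected_dominating_set V E C" "card C = gamma_c V E"
    by (auto simp: T_def)
  have CV: "C \<subseteq> V" and domC: "\<And>v. v \<in> V \<Longrightarrow> v \<in> C \<or> (\<exists>u\<in>C. E u v)"
    and cC: "graph_connected C (induced_edges E C)"
    using C(1) by (auto simp: connected_dominating_set_def dominating_set_def)
  have Cfin: "finite C" using CV fin finite_subset by blast
  define Ds where "Ds = {dist V E x y | x y. x \<in> V \<and> y \<in> V}"
  have "Ds \<subseteq> (\<lambda>(x,y). dist V E x y) ` (V \<times> V)" by (auto simp: Ds_def)
  hence "finite Ds" using fin finite_subset by blast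
  moreover have "Ds \<noteq> {}" using Vne by (auto simp: Ds_def)
  ultimately have "diam V E \<in> Ds" unfolding diam_def Ds_def[symmetric] by (rule Max_in)
  then obtain x y where xy: "x \<in> V" "y \<in> V" "diam V E = dist V E x y" by (auto simp: Ds_def)
  obtain x' where x': "x' \<in> C" "x' = x \<or> E x' x" using domC[OF xy(1)] by blast
  obtain y' where y': "y' \<in> C" "y' = y \<or> E y' y" using domC[OF xy(2)] by blast
  obtain q where q: "path_between C (induced_edges E C) x' y' q"
    using cC x' y' by (auto simp: graph_connected_def)
  have qG: "path_between V E x' y' q"
    using q CV unfolding path_between_def is_path_def
    by (auto intro: successively_mono simp: induced_edges_def)
  have "length q = card (set q)" using q by (auto simp: path_between_def is_path_def distinct_card)
  also have "card (set q) \<le> card C" using q Cfin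
    by (intro card_mono) (auto simp: path_between_def is_path_def)
  finally have d1: "dist V E x' y' \<le> card C - 1" using dist_le[OF qG] by linarith
  have x'V: "x' \<in> V" "y' \<in> V" using x' y' CV by auto
  have d2: "dist V E x y' \<le> dist V E x' y' + 1"
    using x'(2) dist_step[of E x x' V y' q] qG sym xy(1) by auto
  obtain r where r: "path_between V E y' x r" using conn x'V(2) xy(1) by blast
  have dxy: "dist V E x y \<le> dist V E x y' + 1"
  proof (cases "y' = y")
    case False
    hence "E y y'" using y'(2) sym by blast
    obtain r2 where r2: "path_between V E y x r2" using conn xy by blast
    have "dist V E x y = dist V E y x" using dist_sym_eq[OF _ r2] sym by blast
    also have "\<dots> \<le> dist V E y' x + 1" using dist_step[OF \<open>E y y'\<close> xy(2) r] .
    also have "dist V E y' x = dist V E x y'" using dist_sym_eq[OF _ r] sym by metis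
    finally show ?thesis by simp
  qed simp
  have "dist V E x y' \<le> dist V E x' y' + 1"
  proof (cases "x' = x")
    case False
    hence "E x x'" using x'(2) sym by blast
    thus ?thesis using dist_step[OF _ xy(1) qG] by blast
  qed simp
  moreover have "card C \<ge> 1" using Cfin x'(1) by (metis One_nat_def Suc_leI card_gt_0_iff empty_iff)
  ultimately have "diam V E \<le> card C + 1" using dxy d1 xy(3) by linarith
  thus ?thesis using up C(2) by linarith
qed

end
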